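(* Let $s$ be a positive integer and $r$ a nonnegative integer, and let $\mathcal{E}_{s}^{(r)}$ be the set of marked Dyck paths from $(0,0)$ to $(2s,0)$ with exactly $r$ marked returns. Then \[ \sum_{D \in \mathcal{E}_{s}^{(r)}} q^{\mathrm{vmr}(D)} = q^{\binom{r+1}{2}}\frac{1-q^{r+1}}{1-q^s}\,\begin{bmatrix}2s\\ s+r+1\end{bmatrix}_q. \]
   Context: A Dyck path from $(0,0)$ to $(2s,0)$ is a sequence of lattice points $v_0=(0,0),v_1,\ldots,v_{2s}=(2s,0)$ with each step in $\{(1,1),(1,-1)\}$ that never goes below the $x$-axis. A point $v_i$ ($0<i<2s$) is a valley if $v_i-v_{i-1}=(1,-1)$ and $v_{i+1}-v_i=(1,1)$; a valley on the $x$-axis is a return. A marked Dyck path is a Dyck path together with a choice of which of its returns are marked (each return independently). For such $D$, $\mathrm{maj}(D)$ is the sum of the $x$-coordinates of all valleys of $D$, and $\mathrm{vmr}(D)=\mathrm{maj}(D)-\frac12\sum x_i$, the last sum over the $x$-coordinates $x_i$ of the marked returns. Notation: $(a;q)_n=(1-a)\cdots(1-aq^{n-1})$ and $\begin{bmatrix}n\\k\end{bmatrix}_q=\frac{(q;q)_n}{(q;q)_k(q;q)_{n-k}}$ for $n\ge k\ge0$, $0$ otherwise. *)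

theory Defs
  imports Main
begin

text \<open>A lattice path with steps (1,1) and (1,-1) is encoded as a list of booleans:
  True = up step (1,1), False = down step (1,-1). The point v_i is (i, height xs i).\<close>

definition height :: "bool list \<Rightarrow> nat \<Rightarrow> int" where
  "height xs i = int (length (filter (\<lambda>b. b) (take i xs)))
               - int (length (filter (\<lambda>b. \<not> b) (take i xs)))"

definition dyck_path :: "nat \<Rightarrow> bool list \<Rightarrow> bool" where
  "dyck_path s xs \<longleftrightarrow> length xs = 2 * s \<and> (\<forall>i \<le> 2 * s. height xs i \<ge> 0) \<and> height xs (2 * s) = 0"

text \<open>Valley at v_i (0 < i < length): step i (from v_(i-1) to v_i) is down, step i+1 is up.\<close>
definition valleys :: "bool list \<Rightarrow> nat set" where
  "valleys xs = {i. 0 < i \<and> i < length xs \<and> \<not> xs ! (i - 1) \<and> xs ! i}"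

definition returns :: "bool list \<Rightarrow> nat set" where
  "returns xs = {i \<in> valleys xs. height xs i = 0}"

definition maj :: "bool list \<Rightarrow> nat" where
  "maj xs = (\<Sum>i\<in>valleys xs. i)"

text \<open>Marked Dyck path = (path, set of x-coordinates of the marked returns).
  Returns have even x-coordinate, so the halved sum is exact.\<close>
definition vmr :: "bool list \<Rightarrow> nat set \<Rightarrow> nat" where
  "vmr xs M = maj xs - (\<Sum>i\<in>M. i) div 2"

definition marked_dyck :: "nat \<Rightarrow> nat \<Rightarrow> (bool list \<times> nat set) set" where
  "marked_dyck s r = {(xs, M). dyck_path s xs \<and> M \<subseteq> returns xs \<and> card M = r}"

definition qpoch :: "'a::field \<Rightarrow> 'a \<Rightarrow> nat \<Rightarrow> 'a" where
  "qpoch a q n = (\<Prod>j<n. 1 - a * q ^ j)"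

definition qbinom :: "'a::field \<Rightarrow> nat \<Rightarrow> nat \<Rightarrow> 'a" where
  "qbinom q n k = (if k \<le> n then qpoch q q n / (qpoch q q k * qpoch q q (n - k)) else 0)"

end

theory Submission
  imports Defs
begin

fun gb :: "'a::comm_ring_1 \<Rightarrow> nat \<Rightarrow> int \<Rightarrow> 'a" where
  "gb q 0 j = (if j = 0 then 1 else 0)"
| "gb q (Suc m) j = (if j < 0 then 0 else gb q m (j - 1) + q ^ nat j * gb q m j)"

lemma gb_neg: "j < 0 \<Longrightarrow> gb q m j = 0"
  by (cases m) auto

lemma gb_big: "j > int m \<Longrightarrow> gb q m j = 0"
proof (induction m arbitrary: j)
  case 0 then show ?case by simp
next
  case (Suc m) then show ?case by simp
qed

lemma gb_nz: "gb q m j \<noteq> 0 \<Longrightarrow> 0 \<le> j \<and> j \<le> int m"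
  using gb_neg gb_big by (metis linorder_not_le)

lemma gb_Suc: "gb q (Suc m) j = gb q m (j - 1) + q ^ nat j * gb q m j"
  by (auto simp: gb_neg)

declare gb.simps(2)[simp del]

lemma gb_Suc2: "gb q (Suc m) j = q ^ nat (int m + 1 - j) * gb q m (j - 1) + gb q m j"
proof (induction m arbitrary: j)
  case 0
  then show ?case
    by (cases "j = 0"; cases "j = 1"; auto simp: gb_neg gb.simps)
next
  case (Suc m)
  have e1: "gb q (Suc m) (j - 1) = q ^ nat (int m + 2 - j) * gb q m (j - 2) + gb q m (j - 1)"
    using Suc.IH[of "j - 1"] by (simp add: algebra_simps)
  have e2: "gb q (Suc m) j = q ^ nat (int m + 1 - j) * gb q m (j - 1) + gb q m j"
    using Suc.IH[of j] .
  have e3: "gb q (Suc m) (j - 1) = gb q m (j - 2) + q ^ nat (j - 1) * gb q m (j - 1)"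
    using gb_Suc[of q m "j - 1"] by simp
  have e4: "gb q (Suc m) j = gb q m (j - 1) + q ^ nat j * gb q m j"
    using gb_Suc .
  have key: "q ^ nat j * (q ^ nat (int m + 1 - j) * gb q m (j - 1))
           = q ^ nat (int m + 2 - j) * (q ^ nat (j - 1) * gb q m (j - 1))"
  proof (cases "gb q m (j - 1) = 0")
    case True then show ?thesis by simp
  next
    case False
    then have "0 \<le> j - 1" "j - 1 \<le> int m" using gb_nz by blast+
    then have "nat j + nat (int m + 1 - j) = nat (int m + 2 - j) + nat (j - 1)" by linarith
    then show ?thesis by (simp add: mult.assoc[symmetric] power_add[symmetric])
  qed
  have "gb q (Suc (Suc m)) j = gb q (Suc m) (j - 1) + q ^ nat j * gb q (Suc m) j"
    by (rule gb_Suc)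
  also have "\<dots> = q ^ nat (int m + 2 - j) * gb q m (j - 2) + gb q m (j - 1)
      + q ^ nat j * (q ^ nat (int m + 1 - j) * gb q m (j - 1)) + q ^ nat j * gb q m j"
    by (simp add: e1 e2 algebra_simps)
  also have "\<dots> = q ^ nat (int m + 2 - j) * (gb q m (j - 2) + q ^ nat (j - 1) * gb q m (j - 1))
      + (gb q m (j - 1) + q ^ nat j * gb q m j)"
    unfolding key by (simp add: algebra_simps)
  also have "\<dots> = q ^ nat (int (Suc m) + 1 - j) * gb q (Suc m) (j - 1) + gb q (Suc m) j"
    by (simp add: e3 e4 algebra_simps)
  finally show ?case .
qed

lemma gb_sym: "gb q m j = gb q m (int m - j)"
proof (induction m arbitrary: j)
  case 0 then show ?case by simp
next
  case (Suc m)
  have a: "gb q (Suc m) (int (Suc m) - j) = q ^ nat (int m + 1 - (int (Suc m) - j)) * gb q m (int (Suc m) - j - 1)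
      + gb q m (int (Suc m) - j)" by (rule gb_Suc2)
  have e1: "int m + 1 - (int (Suc m) - j) = j" by simp
  have e2: "int (Suc m) - j - 1 = int m - j" by simp
  have e3: "int (Suc m) - j = int m - (j - 1)" by simp
  have "gb q (Suc m) (int (Suc m) - j) = q ^ nat j * gb q m j + gb q m (j - 1)"
    using a unfolding e1 e2 e3 using Suc.IH[of j] Suc.IH[of "j - 1"] by simp
  then show ?case by (simp add: gb_Suc algebra_simps)
qed

lemma gb_0: "gb q m 0 = 1"
  by (induction m) (auto simp: gb_neg gb.simps)

lemma gb_top: "gb q m (int m) = 1"
  by (induction m) (auto simp: gb_big gb.simps)

lemma qpoch_Suc: "qpoch q q (Suc n) = qpoch q q n * (1 - q ^ Suc n)"
  by (simp add: qpoch_def)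

lemma gb_qpoch: "k \<le> n \<Longrightarrow> gb q n (int k) * qpoch q q k * qpoch q q (n - k) = qpoch q q n"
proof (induction n arbitrary: k)
  case 0 then show ?case by (simp add: qpoch_def)
next
  case (Suc n)
  show ?case
  proof (cases "k = 0")
    case True then show ?thesis by (simp add: gb_0 qpoch_def)
  next
    case False
    show ?thesis
    proof (cases "k = Suc n")
      case True then show ?thesis using gb_top[of q "Suc n"] by (simp add: qpoch_def)
    next
      case False
      obtain k' where k: "k = Suc k'" using \<open>k \<noteq> 0\<close> not0_implies_Suc by blast
      obtain p where p: "n = k' + Suc p" using Suc.prems False k
        by (metis add_Suc_right less_Suc_eq_le less_imp_Suc_add order_le_less Suc_le_mono)
      have i1: "gb q n (int k') * qpoch q q k' * qpoch q q (Suc p) = qpoch q q n"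
        using Suc.IH[of k'] p by simp
      have i2: "gb q n (int k) * qpoch q q k * qpoch q q p = qpoch q q n"
        using Suc.IH[of k] p k by simp
      have g: "gb q (Suc n) (int k) = gb q n (int k') + q ^ k * gb q n (int k)"
      proof -
        have "int k - 1 = int k'" using k by simp
        then show ?thesis using gb_Suc[of q n "int k"] by simp
      qed
      have qk: "qpoch q q k = qpoch q q k' * (1 - q ^ k)" using k qpoch_Suc by simp
      have qs: "qpoch q q (Suc n - k) = qpoch q q p * (1 - q ^ Suc p)" using k p qpoch_Suc
        by (metis Suc_diff_le diff_Suc_Suc add_diff_cancel_left' le_add1 add_Suc_right)
      have "gb q (Suc n) (int k) * qpoch q q k * qpoch q q (Suc n - k)
          = (gb q n (int k') + q ^ k * gb q n (int k)) * (qpoch q q k' * (1 - q ^ k)) * (qpoch q q p * (1 - q ^ Suc p))"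
        unfolding g qk qs ..
      also have "\<dots> = (gb q n (int k') * qpoch q q k' * (qpoch q q p * (1 - q ^ Suc p))) * (1 - q ^ k)
          + q ^ k * (gb q n (int k) * (qpoch q q k' * (1 - q ^ k)) * qpoch q q p) * (1 - q ^ Suc p)"
        by (simp add: algebra_simps)
      also have "\<dots> = qpoch q q n * (1 - q ^ k) + q ^ k * qpoch q q n * (1 - q ^ Suc p)"
      proof -
        have i1': "gb q n (int k') * qpoch q q k' * (qpoch q q p * (1 - q ^ Suc p)) = qpoch q q n"
          using i1 by (simp add: qpoch_Suc)
        have i2': "gb q n (int k) * (qpoch q q k' * (1 - q ^ k)) * qpoch q q p = qpoch q q n"
          using i2 qk by simp
        show ?thesis by (simp only: i1' i2')
      qed
      also have "\<dots> = qpoch q q n * (1 - q ^ Suc n)"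
        using p k by (simp add: algebra_simps power_add[symmetric])
      finally show ?thesis by (simp add: qpoch_Suc)
    qed
  qed
qed

definition nn :: "bool list \<Rightarrow> bool" where
  "nn xs \<longleftrightarrow> (\<forall>i\<le>length xs. height xs i \<ge> 0)"

lemma height_app: "i \<le> length ys \<Longrightarrow> height (ys @ zs) i = height ys i"
  by (simp add: height_def)

lemma height_snoc_end: "height (ys @ [b]) (Suc (length ys)) = height ys (length ys) + (if b then 1 else -1)"
  by (simp add: height_def)

lemma nn_snoc: "nn (ys @ [b]) \<longleftrightarrow> nn ys \<and> height ys (length ys) + (if b then 1 else -1) \<ge> 0"
proof
  assume a: "nn (ys @ [b])"
  have "nn ys" unfolding nn_def
  proof (intro allI impI)
    fix i assume "i \<le> length ys"
    then have "i \<le> length (ys @ [b])" by simp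
    then show "0 \<le> height ys i" using a height_app[of i ys "[b]"] \<open>i \<le> length ys\<close> unfolding nn_def
      by (metis le_SucI length_append_singleton)
  qed
  moreover have "height ys (length ys) + (if b then 1 else -1) \<ge> 0"
    using a height_snoc_end[of ys b] unfolding nn_def by (metis length_append_singleton order_refl)
  ultimately show "nn ys \<and> height ys (length ys) + (if b then 1 else -1) \<ge> 0" by blast
next
  assume a: "nn ys \<and> height ys (length ys) + (if b then 1 else -1) \<ge> 0"
  show "nn (ys @ [b])" unfolding nn_def
  proof (intro allI impI)
    fix i assume i: "i \<le> length (ys @ [b])"
    show "0 \<le> height (ys @ [b]) i"
    proof (cases "i \<le> length ys")
      case True then show ?thesis using a height_app[of i ys "[b]"] unfolding nn_def by auto
    next
      case False
      then have "i = Suc (length ys)" using i by simp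
      then show ?thesis using a height_snoc_end[of ys b] by simp
    qed
  qed
qed

lemma height_counts: "i \<le> length xs \<Longrightarrow>
   int i = int (length (filter (\<lambda>b. b) (take i xs))) + int (length (filter (\<lambda>b. \<not> b) (take i xs)))"
  using sum_length_filter_compl[of "\<lambda>b. b" "take i xs"] by simp

lemma even_height0: "i \<le> length xs \<Longrightarrow> height xs i = 0 \<Longrightarrow> even i"
proof -
  assume i: "i \<le> length xs" and h: "height xs i = 0"
  have "int i = 2 * int (length (filter (\<lambda>b. b) (take i xs)))"
    using height_counts[OF i] h unfolding height_def by simp
  then have "i = 2 * length (filter (\<lambda>b. b) (take i xs))" by linarith
  then show ?thesis by (metis dvd_triv_left)
qed

lemma valleys_sub: "valleys xs \<subseteq> {..<length xs}"
  unfolding valleys_def by auto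

lemma finite_valleys: "finite (valleys xs)"
  using valleys_sub finite_subset by blast

lemma returns_sub: "returns xs \<subseteq> valleys xs"
  unfolding returns_def by auto

lemma valleys_snoc: "valleys (ys @ [b]) = valleys ys \<union> (if b \<and> ys \<noteq> [] \<and> \<not> last ys then {length ys} else {})"
proof -
  have "i \<in> valleys (ys @ [b]) \<longleftrightarrow> i \<in> valleys ys \<union> (if b \<and> ys \<noteq> [] \<and> \<not> last ys then {length ys} else {})" for i
  proof (cases "i < length ys")
    case True then show ?thesis unfolding valleys_def by (auto simp: nth_append)
  next
    case False
    show ?thesis
    proof (cases "i = length ys")
      case True
      then show ?thesis unfolding valleys_def
        by (cases ys rule: rev_cases) (auto simp: nth_append)
    next
      case False
      then show ?thesis using \<open>\<not> i < length ys\<close> unfolding valleys_def by auto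
    qed
  qed
  then show ?thesis by blast
qed

lemma returns_snoc: "returns (ys @ [b]) = returns ys \<union>
   (if b \<and> ys \<noteq> [] \<and> \<not> last ys \<and> height ys (length ys) = 0 then {length ys} else {})"
proof -
  have "i \<in> returns (ys @ [b]) \<longleftrightarrow> i \<in> returns ys \<union>
   (if b \<and> ys \<noteq> [] \<and> \<not> last ys \<and> height ys (length ys) = 0 then {length ys} else {})" for i
  proof (cases "i \<in> valleys ys")
    case True
    then have "i \<le> length ys" using valleys_sub by fastforce
    then show ?thesis using True unfolding returns_def valleys_snoc by (auto simp: height_app)
  next
    case False
    then show ?thesis unfolding returns_def valleys_snoc by (auto simp: height_app)
  qed
  then show ?thesis by blast
qed

definition W :: "'a::comm_ring_1 \<Rightarrow> bool list \<Rightarrow> nat \<Rightarrow> 'a" where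
  "W q xs r = (\<Sum>M\<in>{M. M \<subseteq> returns xs \<and> card M = r}. q ^ vmr xs M)"

lemma sum_ret_le: "M \<subseteq> returns xs \<Longrightarrow> (\<Sum>i\<in>M. i) \<le> maj xs"
  unfolding maj_def using returns_sub finite_valleys by (meson order_trans sum_mono2 zero_le)

lemma finite_returns: "finite (returns xs)"
  using returns_sub finite_valleys finite_subset by blast

lemma W_nochange:
  assumes "\<not> (b \<and> ys \<noteq> [] \<and> \<not> last ys)"
  shows "W q (ys @ [b]) r = W q ys r"
proof -
  have v: "valleys (ys @ [b]) = valleys ys" by (subst valleys_snoc) (use assms in auto)
  have rr: "returns (ys @ [b]) = returns ys" by (subst returns_snoc) (use assms in auto)
  have "maj (ys @ [b]) = maj ys" unfolding maj_def v ..
  then have "vmr (ys @ [b]) M = vmr ys M" for M unfolding vmr_def by simp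
  then show ?thesis unfolding W_def rr by simp
qed

lemma maj_new:
  assumes "b \<and> ys \<noteq> [] \<and> \<not> last ys"
  shows "maj (ys @ [b]) = maj ys + length ys"
proof -
  have v: "valleys (ys @ [b]) = insert (length ys) (valleys ys)" using assms valleys_snoc by simp
  have "length ys \<notin> valleys ys" using valleys_sub by blast
  then show ?thesis unfolding maj_def v using finite_valleys by simp
qed

lemma vmr_shift:
  assumes "b \<and> ys \<noteq> [] \<and> \<not> last ys" "M \<subseteq> returns ys"
  shows "vmr (ys @ [b]) M = vmr ys M + length ys"
proof -
  have "(\<Sum>i\<in>M. i) div 2 \<le> maj ys" using sum_ret_le[OF assms(2)] by linarith
  then show ?thesis unfolding vmr_def maj_new[OF assms(1)] by simp
qed

lemma vmr_ins:
  assumes "b \<and> ys \<noteq> [] \<and> \<not> last ys" "M \<subseteq> returns ys" "even (length ys)"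
  shows "vmr (ys @ [b]) (insert (length ys) M) = vmr ys M + length ys div 2"
proof -
  have fin: "finite M" using assms(2) finite_returns finite_subset by blast
  have "length ys \<notin> M" using assms(2) returns_sub valleys_sub by blast
  then have s: "(\<Sum>i\<in>insert (length ys) M. i) = length ys + (\<Sum>i\<in>M. i)" using fin by simp
  have d: "(length ys + (\<Sum>i\<in>M. i)) div 2 = length ys div 2 + (\<Sum>i\<in>M. i) div 2"
    using assms(3) by auto
  have "(\<Sum>i\<in>M. i) div 2 \<le> maj ys" using sum_ret_le[OF assms(2)] by linarith
  moreover have "length ys = 2 * (length ys div 2)" using assms(3) by simp
  ultimately show ?thesis unfolding vmr_def maj_new[OF assms(1)] s d by linarith
qed

lemma subsets_insert_split:
  assumes "finite R" "n \<notin> R"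
  shows "{M. M \<subseteq> insert n R \<and> card M = r} =
     {M. M \<subseteq> R \<and> card M = r} \<union> insert n ` {M. M \<subseteq> R \<and> Suc (card M) = r}"
proof (intro set_eqI iffI)
  fix M assume "M \<in> {M. M \<subseteq> insert n R \<and> card M = r}"
  then have M: "M \<subseteq> insert n R" "card M = r" by auto
  have fM: "finite M" using M(1) assms(1) finite_subset by blast
  show "M \<in> {M. M \<subseteq> R \<and> card M = r} \<union> insert n ` {M. M \<subseteq> R \<and> Suc (card M) = r}"
  proof (cases "n \<in> M")
    case True
    have "M = insert n (M - {n})" using True by blast
    moreover have "M - {n} \<subseteq> R" using M(1) by blast
    moreover have "Suc (card (M - {n})) = r" using M(2) True fM
      by (metis card_Suc_Diff1)
    ultimately show ?thesis by blast
  next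
    case False
    then show ?thesis using M by blast
  qed
next
  fix M assume "M \<in> {M. M \<subseteq> R \<and> card M = r} \<union> insert n ` {M. M \<subseteq> R \<and> Suc (card M) = r}"
  then show "M \<in> {M. M \<subseteq> insert n R \<and> card M = r}"
  proof
    assume "M \<in> {M. M \<subseteq> R \<and> card M = r}" then show ?thesis by blast
  next
    assume "M \<in> insert n ` {M. M \<subseteq> R \<and> Suc (card M) = r}"
    then obtain M' where M': "M = insert n M'" "M' \<subseteq> R" "Suc (card M') = r" by blast
    have "finite M'" using M'(2) assms(1) finite_subset by blast
    moreover have "n \<notin> M'" using M'(2) assms(2) by blast
    ultimately show ?thesis using M' by auto
  qed
qed

lemma W_snoc:
  "W q (ys @ [b]) r = (if b \<and> ys \<noteq> [] \<and> \<not> last ys then q ^ length ys * W q ys r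
      + (if height ys (length ys) = 0 \<and> r > 0 then q ^ (length ys div 2) * W q ys (r - 1) else 0)
     else W q ys r)"
proof (cases "b \<and> ys \<noteq> [] \<and> \<not> last ys")
  case False then show ?thesis by (subst if_not_P[OF False]) (rule W_nochange[OF False])
next
  case nv: True
  let ?n = "length ys"
  have A: "(\<Sum>M\<in>{M. M \<subseteq> returns ys \<and> card M = r}. q ^ vmr (ys @ [b]) M) = q ^ ?n * W q ys r"
    unfolding W_def sum_distrib_left
    by (rule sum.cong) (auto simp: vmr_shift[OF nv] power_add mult.commute)
  show ?thesis
  proof (cases "height ys ?n = 0")
    case False
    then have "returns (ys @ [b]) = returns ys" using returns_snoc by simp
    then show ?thesis using nv False A unfolding W_def by simp
  next
    case h0: True
    have ev: "even ?n" using even_height0[of ?n ys] h0 by simp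
    have rr: "returns (ys @ [b]) = insert ?n (returns ys)" using returns_snoc nv h0 by simp
    have nin: "?n \<notin> returns ys" using returns_sub valleys_sub by blast
    let ?A = "{M. M \<subseteq> returns ys \<and> card M = r}"
    let ?B = "{M. M \<subseteq> returns ys \<and> Suc (card M) = r}"
    have split: "{M. M \<subseteq> returns (ys @ [b]) \<and> card M = r} = ?A \<union> insert ?n ` ?B"
      unfolding rr by (rule subsets_insert_split[OF finite_returns nin])
    have finA: "finite ?A" by (rule finite_subset[of _ "Pow (returns ys)"]) (auto simp: finite_returns)
    have finB: "finite ?B" by (rule finite_subset[of _ "Pow (returns ys)"]) (auto simp: finite_returns)
    have disj: "?A \<inter> insert ?n ` ?B = {}" using nin by blast
    have inj: "inj_on (insert ?n) ?B"
      unfolding inj_on_def using nin by (metis (no_types, lifting) insert_ident mem_Collect_eq subsetD)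
    have Bsum: "(\<Sum>M\<in>insert ?n ` ?B. q ^ vmr (ys @ [b]) M)
        = (if r > 0 then q ^ (?n div 2) * W q ys (r - 1) else 0)"
    proof -
      have "(\<Sum>M\<in>insert ?n ` ?B. q ^ vmr (ys @ [b]) M) = (\<Sum>M\<in>?B. q ^ vmr (ys @ [b]) (insert ?n M))"
        by (rule sum.reindex[OF inj, unfolded comp_def])
      also have "\<dots> = (\<Sum>M\<in>?B. q ^ (?n div 2) * q ^ vmr ys M)"
        by (rule sum.cong) (auto simp: vmr_ins[OF nv _ ev] power_add mult.commute)
      also have "\<dots> = q ^ (?n div 2) * (\<Sum>M\<in>?B. q ^ vmr ys M)" by (simp add: sum_distrib_left)
      also have "\<dots> = (if r > 0 then q ^ (?n div 2) * W q ys (r - 1) else 0)"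
      proof (cases r)
        case 0 then show ?thesis by simp
      next
        case (Suc r')
        then have "?B = {M. M \<subseteq> returns ys \<and> card M = r - 1}" by auto
        then show ?thesis using Suc unfolding W_def by simp
      qed
      finally show ?thesis .
    qed
    have "W q (ys @ [b]) r = (\<Sum>M\<in>?A. q ^ vmr (ys @ [b]) M) + (\<Sum>M\<in>insert ?n ` ?B. q ^ vmr (ys @ [b]) M)"
      unfolding W_def split by (rule sum.union_disjoint[OF finA _ disj]) (use finB in simp)
    then show ?thesis using A Bsum nv h0 by simp
  qed
qed

lemma finite_len: "finite {xs::bool list. length xs = n}"
  using finite_lists_length_eq[of "UNIV :: bool set" n] by simp

lemma sum_len_Suc:
  "(\<Sum>xs\<in>{xs::bool list. length xs = Suc n}. f xs) = (\<Sum>ys\<in>{ys. length ys = n}. f (ys @ [True]) + f (ys @ [False]))"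
proof -
  let ?L = "{ys::bool list. length ys = n}"
  have e: "{xs::bool list. length xs = Suc n} = (\<lambda>ys. ys @ [True]) ` ?L \<union> (\<lambda>ys. ys @ [False]) ` ?L"
  proof (intro set_eqI iffI)
    fix xs :: "bool list" assume "xs \<in> {xs. length xs = Suc n}"
    then have l: "length xs = Suc n" by simp
    then obtain ys b where "xs = ys @ [b]" by (metis length_Suc_conv_rev)
    then show "xs \<in> (\<lambda>ys. ys @ [True]) ` ?L \<union> (\<lambda>ys. ys @ [False]) ` ?L" using l by (cases b) auto
  qed auto
  have d: "(\<lambda>ys. ys @ [True]) ` ?L \<inter> (\<lambda>ys. ys @ [False]) ` ?L = {}" by auto
  have i1: "inj_on (\<lambda>ys::bool list. ys @ [True]) ?L" by (auto simp: inj_on_def)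
  have i2: "inj_on (\<lambda>ys::bool list. ys @ [False]) ?L" by (auto simp: inj_on_def)
  show ?thesis unfolding e
    by (subst sum.union_disjoint) (auto simp: finite_len sum.reindex[OF i1] sum.reindex[OF i2] sum.distrib)
qed

definition F :: "'a::comm_ring_1 \<Rightarrow> nat \<Rightarrow> int \<Rightarrow> bool \<Rightarrow> nat \<Rightarrow> 'a" where
  "F q n h d r = (\<Sum>xs\<in>{xs. length xs = n}. if nn xs \<and> height xs n = h \<and> xs \<noteq> [] \<and> last xs = d then W q xs r else 0)"

lemma F_down:
  assumes "n > 0"
  shows "F q (Suc n) h False r = (if h \<ge> 0 then F q n (h + 1) True r + F q n (h + 1) False r else 0)"
proof -
  have "F q (Suc n) h False r = (\<Sum>ys\<in>{ys. length ys = n}.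
      (if h \<ge> 0 then (if nn ys \<and> height ys n = h + 1 \<and> ys \<noteq> [] \<and> last ys = True then W q ys r else 0)
         + (if nn ys \<and> height ys n = h + 1 \<and> ys \<noteq> [] \<and> last ys = False then W q ys r else 0) else 0))"
    unfolding F_def sum_len_Suc
  proof (rule sum.cong[OF refl])
    fix ys :: "bool list" assume "ys \<in> {ys. length ys = n}"
    then have l: "length ys = n" by simp
    then have ne: "ys \<noteq> []" using assms by auto
    show "(if nn (ys @ [True]) \<and> height (ys @ [True]) (Suc n) = h \<and> ys @ [True] \<noteq> [] \<and> last (ys @ [True]) = False
             then W q (ys @ [True]) r else 0) +
          (if nn (ys @ [False]) \<and> height (ys @ [False]) (Suc n) = h \<and> ys @ [False] \<noteq> [] \<and> last (ys @ [False]) = False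
             then W q (ys @ [False]) r else 0) =
          (if h \<ge> 0 then (if nn ys \<and> height ys n = h + 1 \<and> ys \<noteq> [] \<and> last ys = True then W q ys r else 0)
           + (if nn ys \<and> height ys n = h + 1 \<and> ys \<noteq> [] \<and> last ys = False then W q ys r else 0) else 0)"
      using height_snoc_end[of ys False] nn_snoc[of ys False] W_snoc[of q ys False r] ne l
      by (cases "last ys") auto
  qed
  also have "\<dots> = (if h \<ge> 0 then F q n (h + 1) True r + F q n (h + 1) False r else 0)"
    unfolding F_def by (simp add: sum.distrib)
  finally show ?thesis .
qed

lemma F_up:
  assumes "n > 0"
  shows "F q (Suc n) h True r = F q n (h - 1) True r + q ^ n * F q n (h - 1) False r
     + (if h = 1 \<and> r > 0 then q ^ (n div 2) * F q n 0 False (r - 1) else 0)"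
proof -
  have "F q (Suc n) h True r = (\<Sum>ys\<in>{ys. length ys = n}.
      (if nn ys \<and> height ys n = h - 1 \<and> ys \<noteq> [] \<and> last ys = True then W q ys r else 0)
      + q ^ n * (if nn ys \<and> height ys n = h - 1 \<and> ys \<noteq> [] \<and> last ys = False then W q ys r else 0)
      + (if h = 1 \<and> r > 0 then q ^ (n div 2) * (if nn ys \<and> height ys n = 0 \<and> ys \<noteq> [] \<and> last ys = False then W q ys (r - 1) else 0) else 0))"
    unfolding F_def sum_len_Suc
  proof (rule sum.cong[OF refl])
    fix ys :: "bool list" assume "ys \<in> {ys. length ys = n}"
    then have l: "length ys = n" by simp
    then have ne: "ys \<noteq> []" using assms by auto
    show "(if nn (ys @ [True]) \<and> height (ys @ [True]) (Suc n) = h \<and> ys @ [True] \<noteq> [] \<and> last (ys @ [True]) = True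
             then W q (ys @ [True]) r else 0) +
          (if nn (ys @ [False]) \<and> height (ys @ [False]) (Suc n) = h \<and> ys @ [False] \<noteq> [] \<and> last (ys @ [False]) = True
             then W q (ys @ [False]) r else 0) =
      (if nn ys \<and> height ys n = h - 1 \<and> ys \<noteq> [] \<and> last ys = True then W q ys r else 0)
      + q ^ n * (if nn ys \<and> height ys n = h - 1 \<and> ys \<noteq> [] \<and> last ys = False then W q ys r else 0)
      + (if h = 1 \<and> r > 0 then q ^ (n div 2) * (if nn ys \<and> height ys n = 0 \<and> ys \<noteq> [] \<and> last ys = False then W q ys (r - 1) else 0) else 0)"
      using height_snoc_end[of ys True] nn_snoc[of ys True] W_snoc[of q ys True r] ne l
      unfolding nn_def by (cases "last ys") auto
  qed
  also have "\<dots> = F q n (h - 1) True r + q ^ n * F q n (h - 1) False r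
     + (if h = 1 \<and> r > 0 then q ^ (n div 2) * F q n 0 False (r - 1) else 0)"
  proof (cases "h = 1 \<and> r > 0")
    case True then show ?thesis unfolding F_def by (simp add: sum.distrib sum_distrib_left)
  next
    case False then show ?thesis unfolding F_def if_not_P[OF False] by (simp add: sum.distrib sum_distrib_left)
  qed
  finally show ?thesis .
qed

lemma F_top_False: "F q n (int n) False r = 0"
  unfolding F_def
proof (rule sum.neutral, intro ballI)
  fix xs :: "bool list" assume "xs \<in> {xs. length xs = n}"
  then have l: "length xs = n" by simp
  show "(if nn xs \<and> height xs n = int n \<and> xs \<noteq> [] \<and> last xs = False then W q xs r else 0) = 0"
  proof (cases "height xs n = int n \<and> xs \<noteq> []")
    case True
    have c: "int n = int (length (filter (\<lambda>b. b) xs)) + int (length (filter (\<lambda>b. \<not> b) xs))"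
      using height_counts[of n xs] l by simp
    have "height xs n = int (length (filter (\<lambda>b. b) xs)) - int (length (filter (\<lambda>b. \<not> b) xs))"
      unfolding height_def using l by simp
    then have "length (filter (\<lambda>b. \<not> b) xs) = 0" using c True by linarith
    then have "\<forall>x\<in>set xs. x" by (simp add: filter_empty_conv)
    then have "last xs" using True last_in_set by blast
    then show ?thesis by simp
  next
    case False then show ?thesis by auto
  qed
qed

lemma F_zero_True: "F q n 0 True r = 0"
  unfolding F_def
proof (rule sum.neutral, intro ballI)
  fix xs :: "bool list" assume "xs \<in> {xs. length xs = n}"
  then have l: "length xs = n" by simp
  show "(if nn xs \<and> height xs n = 0 \<and> xs \<noteq> [] \<and> last xs = True then W q xs r else 0) = 0"
  proof (cases "nn xs \<and> height xs n = 0 \<and> xs \<noteq> [] \<and> last xs = True")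
    case True
    then obtain ys where ys: "xs = ys @ [True]" by (metis append_butlast_last_id)
    have "nn ys \<and> height ys (length ys) + 1 \<ge> 0" using True nn_snoc[of ys True] ys by simp
    moreover have "height ys (length ys) + 1 = 0" using True height_snoc_end[of ys True] ys l by simp
    moreover have "height ys (length ys) \<ge> 0" using calculation(1) unfolding nn_def by simp
    ultimately show ?thesis by simp
  next
    case False then show ?thesis by (rule if_not_P)
  qed
qed

lemma F_one: "F q 1 1 True r = (if r = 0 then 1 else 0)"
proof -
  have L: "{xs::bool list. length xs = 1} = {[True], [False]}"
    by (auto simp: length_Suc_conv)
  have hT: "height [True] 1 = 1" by (simp add: height_def)
  have hF: "height [False] 1 = -1" by (simp add: height_def)
  have nT: "nn [True]" unfolding nn_def height_def by (auto simp: le_Suc_eq)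
  have v: "valleys [True] = {}" unfolding valleys_def by auto
  then have rt: "returns [True] = {}" unfolding returns_def by auto
  have "{M. M \<subseteq> returns [True] \<and> card M = r} = (if r = 0 then {{}} else {})" unfolding rt by auto
  then have w: "W q [True] r = (if r = 0 then 1 else 0)" unfolding W_def by (auto simp: vmr_def maj_def v)
  show ?thesis unfolding F_def L using hT hF nT w by simp
qed

fun tri :: "nat \<Rightarrow> nat" where
  "tri 0 = 0"
| "tri (Suc r) = tri r + Suc r"

lemma tri_pred: "tri (r - 1) + r = tri r"
  by (cases r) auto

definition Dc :: "'a::comm_ring_1 \<Rightarrow> nat \<Rightarrow> nat \<Rightarrow> nat \<Rightarrow> 'a" where
  "Dc q u k r = q ^ tri r * gb q (u + k - 1) (int k - 1 - int r) - q ^ tri (Suc r) * gb q (u + k - 1) (int k - 2 - int r)"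

definition Uc :: "'a::comm_ring_1 \<Rightarrow> nat \<Rightarrow> nat \<Rightarrow> nat \<Rightarrow> 'a" where
  "Uc q u k r = q ^ (k + tri (r - 1)) * gb q (u + k - 1) (int k - int r) - q ^ (k + tri r) * gb q (u + k - 1) (int k - int r - 1)"

lemma pw: "gb q m (int a - int b) * q ^ (tri b + nat (int a - int b)) = gb q m (int a - int b) * q ^ (a + tri (b - 1))"
proof (cases "gb q m (int a - int b) = 0")
  case False
  then have "b \<le> a" using gb_nz by fastforce
  then have "tri b + nat (int a - int b) = a + tri (b - 1)" using tri_pred[of b] by linarith
  then show ?thesis by simp
qed simp

lemma A1:
  assumes "k0 < u"
  shows "Dc q u (Suc k0) r = Uc q u k0 r + Dc q u k0 r"
proof -
  define m where "m = u + k0 - 1"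
  have m: "u + k0 - 1 = m" "u + Suc k0 - 1 = Suc m" using assms unfolding m_def by auto
  have e1: "int (Suc k0) - 1 - int r = int k0 - int r" by simp
  have e2: "int (Suc k0) - 2 - int r = int k0 - int (Suc r)" by simp
  have e3: "int k0 - int (Suc r) - 1 = int k0 - 2 - int r" by simp
  have e4: "int k0 - int r - 1 = int k0 - int (Suc r)" by simp
  have p1: "q ^ tri r * (q ^ nat (int k0 - int r) * gb q m (int k0 - int r)) = q ^ (k0 + tri (r - 1)) * gb q m (int k0 - int r)"
    using pw[of q m k0 r] by (simp add: power_add algebra_simps)
  have p2: "q ^ tri (Suc r) * (q ^ nat (int k0 - int (Suc r)) * gb q m (int k0 - int (Suc r))) = q ^ (k0 + tri r) * gb q m (int k0 - int (Suc r))"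
    using pw[of q m k0 "Suc r"] by (simp add: power_add algebra_simps)
  have "Dc q u (Suc k0) r = q ^ tri r * (gb q m (int k0 - int r - 1) + q ^ nat (int k0 - int r) * gb q m (int k0 - int r))
      - q ^ tri (Suc r) * (gb q m (int k0 - int (Suc r) - 1) + q ^ nat (int k0 - int (Suc r)) * gb q m (int k0 - int (Suc r)))"
    unfolding Dc_def m e1 e2 gb_Suc ..
  also have "\<dots> = (q ^ tri r * (q ^ nat (int k0 - int r) * gb q m (int k0 - int r)) - q ^ tri (Suc r) * (q ^ nat (int k0 - int (Suc r)) * gb q m (int k0 - int (Suc r))))
      + (q ^ tri r * gb q m (int k0 - int r - 1) - q ^ tri (Suc r) * gb q m (int k0 - int (Suc r) - 1))"
    by (simp add: algebra_simps)
  also have "\<dots> = Uc q u k0 r + Dc q u k0 r"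
    unfolding p1 p2 Uc_def Dc_def m e3 e4 by (simp add: algebra_simps)
  finally show ?thesis .
qed

lemma A2:
  assumes "k \<le> u0" "0 < u0 + k"
  shows "Uc q (Suc u0) k r = Uc q u0 k r + q ^ (u0 + k) * Dc q u0 k r"
proof -
  define m where "m = u0 + k - 1"
  define n where "n = u0 + k"
  have m: "u0 + k - 1 = m" "Suc u0 + k - 1 = Suc m" and n: "n = Suc m" using assms unfolding m_def n_def by auto
  have kn: "k \<le> n" unfolding n_def by simp
  have x1: "nat (int m + 1 - (int k - int r)) = n - k + r" using n kn by simp
  have x2: "nat (int m + 1 - (int k - int r - 1)) = n - k + r + 1" using n kn by simp
  have y1: "k + tri (r - 1) + (n - k + r) = n + tri r" using tri_pred[of r] kn by simp
  have y2: "k + tri r + (n - k + r + 1) = n + tri (Suc r)" using kn by simp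
  have e1: "int k - int r - 1 - 1 = int k - 2 - int r" by simp
  have e2: "int k - int r - 1 = int k - 1 - int r" by simp
  have "Uc q (Suc u0) k r = q ^ (k + tri (r - 1)) * (q ^ (n - k + r) * gb q m (int k - int r - 1) + gb q m (int k - int r))
     - q ^ (k + tri r) * (q ^ (n - k + r + 1) * gb q m (int k - int r - 1 - 1) + gb q m (int k - int r - 1))"
    unfolding Uc_def m gb_Suc2 x1 x2 ..
  also have "\<dots> = (q ^ (k + tri (r - 1)) * gb q m (int k - int r) - q ^ (k + tri r) * gb q m (int k - int r - 1))
     + (q ^ (k + tri (r - 1) + (n - k + r)) * gb q m (int k - int r - 1) - q ^ (k + tri r + (n - k + r + 1)) * gb q m (int k - int r - 1 - 1))"
    by (simp add: power_add algebra_simps)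
  also have "\<dots> = Uc q u0 k r + q ^ n * Dc q u0 k r"
    unfolding y1 y2 e1 Uc_def Dc_def m e2 by (simp add: power_add algebra_simps)
  finally show ?thesis unfolding n_def .
qed

lemma A3:
  assumes "0 < u0"
  shows "Uc q u0 u0 r = (if r > 0 then q ^ u0 * Dc q u0 u0 (r - 1) else 0)"
proof (cases r)
  case 0
  have "gb q (u0 + u0 - 1) (int u0 - 1) = gb q (u0 + u0 - 1) (int u0)"
    using gb_sym[of q "u0 + u0 - 1" "int u0 - 1"] assms by (simp add: of_nat_diff)
  then show ?thesis using 0 unfolding Uc_def by simp
next
  case (Suc r')
  have e1: "int u0 - 1 - int (r - 1) = int u0 - int r" using Suc by simp
  have e2: "int u0 - 2 - int (r - 1) = int u0 - int r - 1" using Suc by simp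
  have "Suc (r - 1) = r" using Suc by simp
  then show ?thesis using Suc unfolding Uc_def Dc_def e1 e2 by (simp add: power_add algebra_simps)
qed

lemma main:
  "u + k = n \<Longrightarrow> 0 < n \<Longrightarrow> k \<le> u \<Longrightarrow>
    F q n (int u - int k) False r = Dc q u k r \<and> (k < u \<longrightarrow> F q n (int u - int k) True r = Uc q u k r)"
proof (induction n arbitrary: u k r)
  case 0 then show ?case by simp
next
  case (Suc n)
  show ?case
  proof (cases "n = 0")
    case True
    then have uk: "u = 1" "k = 0" using Suc.prems by auto
    have f1: "F q 1 1 False r = 0" using F_top_False[of q 1 r] by simp
    have d: "Dc q 1 0 r = 0" unfolding Dc_def by (simp add: gb_neg)
    have uc: "Uc q 1 0 r = (if r = 0 then 1 else 0)" unfolding Uc_def by (simp add: gb_neg)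
    show ?thesis using uk True f1 d uc F_one[of q r] by simp
  next
    case npos: False
    have IH: "\<And>u k r. u + k = n \<Longrightarrow> k \<le> u \<Longrightarrow>
      F q n (int u - int k) False r = Dc q u k r \<and> (k < u \<longrightarrow> F q n (int u - int k) True r = Uc q u k r)"
      using Suc.IH npos by blast
    have FD: "F q (Suc n) (int u - int k) False r = Dc q u k r"
    proof (cases k)
      case 0
      then have "int u - int k = int (Suc n)" using Suc.prems by simp
      then have "F q (Suc n) (int u - int k) False r = 0" using F_top_False by metis
      moreover have "Dc q u k r = 0" using 0 unfolding Dc_def by (simp add: gb_neg)
      ultimately show ?thesis by simp
    next
      case (Suc k0)
      then have k0: "k0 < u" "u + k0 = n" using Suc.prems by auto
      have h: "int u - int k \<ge> 0" "int u - int k + 1 = int u - int k0" using Suc k0 by auto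
      have "F q (Suc n) (int u - int k) False r = F q n (int u - int k0) True r + F q n (int u - int k0) False r"
        using F_down[of n q "int u - int k" r] npos h by simp
      also have "\<dots> = Uc q u k0 r + Dc q u k0 r" using IH[OF k0(2)] k0(1) by simp
      also have "\<dots> = Dc q u k r" unfolding Suc by (rule A1[OF k0(1), symmetric])
      finally show ?thesis .
    qed
    have FU: "k < u \<Longrightarrow> F q (Suc n) (int u - int k) True r = Uc q u k r"
    proof -
      assume "k < u"
      then obtain u0 where u0: "u = Suc u0" "k \<le> u0" by (metis Suc_le_eq less_imp_Suc_add le_add1 add_Suc)
      have n: "u0 + k = n" using u0 Suc.prems by simp
      have hm: "int u - int k - 1 = int u0 - int k" using u0 by simp
      have up: "F q (Suc n) (int u - int k) True r = F q n (int u0 - int k) True r + q ^ n * F q n (int u0 - int k) False r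
         + (if int u - int k = 1 \<and> r > 0 then q ^ (n div 2) * F q n 0 False (r - 1) else 0)"
        using F_up[of n q "int u - int k" r] npos unfolding hm by simp
      show ?thesis
      proof (cases "k < u0")
        case True
        have "F q (Suc n) (int u - int k) True r = Uc q u0 k r + q ^ n * Dc q u0 k r"
          using up IH[OF n u0(2)] True u0 by simp
        also have "\<dots> = Uc q u k r" using A2[OF u0(2), of q r] n npos u0 by simp
        finally show ?thesis .
      next
        case False
        then have ku: "k = u0" using u0 by simp
        have u0p: "0 < u0" using n npos ku by simp
        have nd: "n div 2 = u0" using n ku by simp
        have z: "int u0 - int k = 0" using ku by simp
        have a: "F q n 0 False r = Dc q u0 u0 r" using IH[OF n u0(2), of r] z ku by simp
        have b: "F q n 0 False (r - 1) = Dc q u0 u0 (r - 1)" using IH[OF n u0(2), of "r - 1"] z ku by simp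
        have c: "F q n 0 True r = 0" by (rule F_zero_True)
        have "F q (Suc n) (int u - int k) True r = q ^ n * Dc q u0 u0 r + (if r > 0 then q ^ u0 * Dc q u0 u0 (r - 1) else 0)"
          using up unfolding z a b c nd using u0 ku by simp
        also have "\<dots> = Uc q u k r" using A2[OF u0(2), of q r] A3[OF u0p, of q r] n npos u0 ku by simp
        finally show ?thesis .
      qed
    qed
    show ?thesis using FD FU by blast
  qed
qed

lemma tri_choose: "tri r = Suc r choose 2"
proof (induction r)
  case 0 then show ?case by simp
next
  case (Suc r)
  have "(Suc (Suc r) choose 2) = (Suc r choose 1) + (Suc r choose 2)"
    by (metis binomial_Suc_Suc one_add_one plus_1_eq_Suc)
  then show ?case using Suc by simp
qed

lemma qpoch_nz:
  fixes q :: "'a::field"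
  assumes "\<forall>j\<in>{1..N}. q ^ j \<noteq> 1" "n \<le> N"
  shows "qpoch q q n \<noteq> 0"
proof -
  have "\<forall>j\<in>{..<n}. 1 - q * q ^ j \<noteq> 0"
  proof
    fix j assume "j \<in> {..<n}"
    then have "Suc j \<in> {1..N}" using assms(2) by simp
    then have "q ^ Suc j \<noteq> 1" using assms(1) by blast
    then show "1 - q * q ^ j \<noteq> 0" by simp
  qed
  then show ?thesis unfolding qpoch_def by (simp add: prod_zero_iff)
qed

lemma final_alg:
  fixes q :: "'a::field"
  assumes ne: "\<forall>j\<in>{1..2 * s}. q ^ j \<noteq> 1" and s: "s > 0"
  shows "Dc q s s r = q ^ ((r + 1) choose 2) * ((1 - q ^ (r + 1)) / (1 - q ^ s)) * qbinom q (2 * s) (s + r + 1)"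
proof (cases "r < s")
  case False
  have "Dc q s s r = 0" unfolding Dc_def using False by (simp add: gb_neg)
  moreover have "qbinom q (2 * s) (s + r + 1) = 0" unfolding qbinom_def using False by simp
  ultimately show ?thesis by simp
next
  case True
  define p where "p = s - 1 - r"
  have sp: "s = p + r + 1" using True unfolding p_def by simp
  define m where "m = 2 * s - 1"
  have m2: "Suc m = 2 * s" using s unfolding m_def by simp
  define A where "A = gb q m (int (s + r))"
  define B where "B = gb q m (int (s + r + 1))"
  define G where "G = gb q (Suc m) (int (s + r + 1))"
  have e: "int (s + r + 1) - 1 = int (s + r)" by simp
  have g1: "G = A + q ^ (s + r + 1) * B"
    unfolding G_def A_def B_def gb_Suc e nat_int ..
  have g2: "G = q ^ p * A + B"
  proof -
    have "nat (int m + 1 - int (s + r + 1)) = p" using m2 sp by simp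
    then show ?thesis unfolding G_def A_def B_def gb_Suc2 by simp
  qed
  have dA: "gb q m (int s - 1 - int r) = A"
  proof -
    have e: "int m - (int s - 1 - int r) = int (s + r)" using m2 sp by simp
    show ?thesis unfolding A_def using gb_sym[of q m "int s - 1 - int r"] unfolding e .
  qed
  have dB: "gb q m (int s - 2 - int r) = B"
  proof -
    have e: "int m - (int s - 2 - int r) = int (s + r + 1)" using m2 sp by simp
    show ?thesis unfolding B_def using gb_sym[of q m "int s - 2 - int r"] unfolding e .
  qed
  have Dc: "Dc q s s r = q ^ tri r * (A - q ^ (r + 1) * B)"
  proof -
    have "s + s - 1 = m" unfolding m_def by simp
    then show ?thesis unfolding Dc_def dA dB using dA dB by (simp add: algebra_simps power_add)
  qed
  have a_le: "s + r + 1 \<le> 2 * s" using True by simp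
  have qa: "qpoch q q (s + r + 1) \<noteq> 0" using qpoch_nz[OF ne a_le] .
  have qb: "qpoch q q (2 * s - (s + r + 1)) \<noteq> 0" using qpoch_nz[OF ne] by simp
  have Gq: "G * qpoch q q (s + r + 1) * qpoch q q (2 * s - (s + r + 1)) = qpoch q q (2 * s)"
    unfolding G_def m2 using gb_qpoch[OF a_le] by simp
  have qbin: "qbinom q (2 * s) (s + r + 1) = G"
    unfolding qbinom_def using a_le qa qb Gq by (simp add: field_simps)
  have ns: "1 - q ^ s \<noteq> 0" using ne s by auto
  define x where "x = q ^ (r + 1)"
  define y where "y = q ^ p"
  have qs: "q ^ s = x * y" unfolding x_def y_def sp by (simp add: power_add algebra_simps)
  have qa': "q ^ (s + r + 1) = y * x ^ 2" unfolding x_def y_def sp by (simp add: power_add power2_eq_square algebra_simps)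
  have h: "A + y * x ^ 2 * B = y * A + B" using g1 g2 unfolding qa' y_def by simp
  have key: "(1 - x * y) * (A - x * B) = (1 - x) * (A + y * x ^ 2 * B)"
  proof -
    have "(1 - x * y) * (A - x * B) - (1 - x) * (A + y * x ^ 2 * B) = x * ((A + y * x ^ 2 * B) - (y * A + B))"
      by (simp add: algebra_simps power2_eq_square)
    then show ?thesis using h by simp
  qed
  have E: "A - x * B = (1 - x) / (1 - x * y) * (A + y * x ^ 2 * B)"
    using key ns qs by (simp add: field_simps)
  have t: "(r + 1) choose 2 = tri r" using tri_choose by simp
  show ?thesis unfolding Dc qbin g1 qa' t qs x_def[symmetric] E by (simp add: mult.assoc)
qed

lemma dyck_last:
  assumes "dyck_path s xs" "s > 0"
  shows "nn xs \<and> height xs (2 * s) = 0 \<and> xs \<noteq> [] \<and> last xs = False"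
proof -
  have l: "length xs = 2 * s" and nn: "nn xs" and h: "height xs (2 * s) = 0"
    using assms(1) unfolding dyck_path_def nn_def by auto
  have ne: "xs \<noteq> []" using l assms(2) by auto
  then obtain ys b where ys: "xs = ys @ [b]" by (metis append_butlast_last_id)
  have "nn ys \<and> height ys (length ys) + (if b then 1 else -1) \<ge> 0" using nn ys nn_snoc by blast
  moreover have "height ys (length ys) + (if b then 1 else -1) = 0"
    using h height_snoc_end[of ys b] ys l by simp
  moreover have "height ys (length ys) \<ge> 0" using calculation(1) unfolding nn_def by simp
  ultimately have "\<not> b" by (cases b) auto
  then show ?thesis using nn h ne ys by simp
qed

lemma lhs_F:
  assumes "s > 0"
  shows "(\<Sum>(xs, M)\<in>marked_dyck s r. q ^ vmr xs M) = F q (2 * s) 0 False r"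
proof -
  let ?D = "{xs. dyck_path s xs}"
  have finD: "finite ?D"
    by (rule finite_subset[OF _ finite_len[of "2 * s"]]) (auto simp: dyck_path_def)
  have md: "marked_dyck s r = Sigma ?D (\<lambda>xs. {M. M \<subseteq> returns xs \<and> card M = r})"
    unfolding marked_dyck_def by auto
  have "(\<Sum>(xs, M)\<in>marked_dyck s r. q ^ vmr xs M) = (\<Sum>xs\<in>?D. W q xs r)"
    unfolding md W_def
    by (rule sum.Sigma[symmetric, OF finD])
       (auto intro: finite_subset[of _ "Pow (returns _)"] simp: finite_returns)
  also have "?D = {xs \<in> {xs. length xs = 2 * s}. nn xs \<and> height xs (2 * s) = 0 \<and> xs \<noteq> [] \<and> last xs = False}"
    using dyck_last[OF _ assms] unfolding dyck_path_def nn_def by auto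
  also have "(\<Sum>xs\<in>\<dots>. W q xs r) = F q (2 * s) 0 False r"
    unfolding F_def by (rule sum.inter_filter[OF finite_len])
  finally show ?thesis .
qed

theorem corollary2p4:
  fixes q :: "'a::field" and s r :: nat
  assumes "s > 0"
    and "\<forall>j\<in>{1..2 * s}. q ^ j \<noteq> 1"
  shows "(\<Sum>(xs, M)\<in>marked_dyck s r. q ^ vmr xs M)
         = q ^ ((r + 1) choose 2) * ((1 - q ^ (r + 1)) / (1 - q ^ s)) * qbinom q (2 * s) (s + r + 1)"
proof -
  have "F q (2 * s) (int s - int s) False r = Dc q s s r"
    using main[of s s "2 * s" q r] assms(1) by simp
  then have FD: "F q (2 * s) 0 False r = Dc q s s r" by simp
  have "(\<Sum>(xs, M)\<in>marked_dyck s r. q ^ vmr xs M) = F q (2 * s) 0 False r" by (rule lhs_F[OF assms(1)])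
  also have "\<dots> = Dc q s s r" by (rule FD)
  also have "\<dots> = q ^ ((r + 1) choose 2) * ((1 - q ^ (r + 1)) / (1 - q ^ s)) * qbinom q (2 * s) (s + r + 1)"
    by (rule final_alg[OF assms(2) assms(1)])
  finally show ?thesis .
qed

end
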